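(* Let $a,b>0$ and $p>1$. For each integer $k\ge 3$ let $\mathcal{P}_{p,k}$ be the polygon $P_0P_1\dots P_{k-1}$ (the union of its edges $[P_t,P_{t+1}]$, $t=0,\dots,k-1$, indices modulo $k$), where $$P_t=\frac{1}{\left\|\left(\cos\frac{2t\pi}{k},\sin\frac{2t\pi}{k}\right)\right\|_p}\left(\cos\frac{2t\pi}{k},\ \sin\frac{2t\pi}{k}\right),\quad t=0,1,\dots,k-1,$$ and let $\mathcal{Q}_{p,k}=\operatorname{conv}(\mathcal{P}_{p,k})$. Then $d_H(\mathcal{P}_{p,k},\mathcal{C}_p)\to 0$ as $k\to\infty$, and consequently $d_H(\mathcal{Q}_{p,k},\mathcal{D}_p)\to 0$ as $k\to\infty$.
   Context: $\|(x,y)\|_p=\left(|x/a|^p+|y/b|^p\right)^{1/p}$. The superellipse is $\mathcal{C}_p=\{(x,y)\in\mathbb{R}^2 \mid |x/a|^p+|y/b|^p=1\}$ and the superelliptic disk is $\mathcal{D}_p=\operatorname{conv}(\mathcal{C}_p)=\{(x,y)\in\mathbb{R}^2\mid |x/a|^p+|y/b|^p\le 1\}$. The points $P_t$ lie on $\mathcal{C}_p$. $d_H$ is the Hausdorff–Pompeiu distance with respect to the Euclidean norm: $d_H(A,B)=\max\{\sup_{x\in A}\inf_{y\in B}\|x-y\|,\sup_{y\in B}\inf_{x\in A}\|x-y\|\}$. *)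

theory Defs
  imports "HOL-Analysis.Analysis"
begin

text \<open>Points of the plane are modelled as \<open>real \<times> real\<close>; the norm/dist on this
  product type is the Euclidean one.\<close>

definition pnorm :: "real \<Rightarrow> real \<Rightarrow> real \<Rightarrow> real \<times> real \<Rightarrow> real" where
  "pnorm a b p v = (\<bar>fst v / a\<bar> powr p + \<bar>snd v / b\<bar> powr p) powr (1 / p)"

definition superellipse :: "real \<Rightarrow> real \<Rightarrow> real \<Rightarrow> (real \<times> real) set" where
  "superellipse a b p = {(x, y). \<bar>x / a\<bar> powr p + \<bar>y / b\<bar> powr p = 1}"

definition superelliptic_disk :: "real \<Rightarrow> real \<Rightarrow> real \<Rightarrow> (real \<times> real) set" where
  "superelliptic_disk a b p = convex hull (superellipse a b p)"

definition hausdorff_dist :: "('a::metric_space) set \<Rightarrow> 'a set \<Rightarrow> real" where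
  "hausdorff_dist A B = max (SUP x\<in>A. infdist x B) (SUP y\<in>B. infdist y A)"

definition vertex :: "real \<Rightarrow> real \<Rightarrow> real \<Rightarrow> nat \<Rightarrow> nat \<Rightarrow> real \<times> real" where
  "vertex a b p k t =
     (let u = (cos (2 * real t * pi / real k), sin (2 * real t * pi / real k))
      in (1 / pnorm a b p u) *\<^sub>R u)"

definition polygon :: "real \<Rightarrow> real \<Rightarrow> real \<Rightarrow> nat \<Rightarrow> (real \<times> real) set" where
  "polygon a b p k =
     (\<Union>t\<in>{..<k}. closed_segment (vertex a b p k t) (vertex a b p k ((t + 1) mod k)))"

definition polygon_hull :: "real \<Rightarrow> real \<Rightarrow> real \<Rightarrow> nat \<Rightarrow> (real \<times> real) set" where
  "polygon_hull a b p k = convex hull (polygon a b p k)"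

end

theory Submission
  imports Defs
begin

lemma hd_bound:
  fixes A B :: "'a::metric_space set"
  assumes "A \<noteq> {}" "B \<noteq> {}" "\<forall>x\<in>A. infdist x B \<le> e" "\<forall>y\<in>B. infdist y A \<le> e"
  shows "0 \<le> hausdorff_dist A B \<and> hausdorff_dist A B \<le> e"
proof -
  have s1: "(SUP x\<in>A. infdist x B) \<le> e" using assms by (intro cSUP_least) auto
  have s2: "(SUP y\<in>B. infdist y A) \<le> e" using assms by (intro cSUP_least) auto
  obtain x where x: "x \<in> A" using assms by auto
  have bdd: "bdd_above ((\<lambda>x. infdist x B) ` A)" using assms(3) by (auto intro: bdd_aboveI2)
  have "0 \<le> infdist x B" by (simp add: infdist_nonneg)
  also have "\<dots> \<le> (SUP x\<in>A. infdist x B)" by (rule cSUP_upper[OF x bdd])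
  finally show ?thesis using s1 s2 unfolding hausdorff_dist_def by auto
qed

lemma infdist_lessE:
  fixes B :: "'a::metric_space set"
  assumes "B \<noteq> {}" "infdist x B < r"
  obtains y where "y \<in> B" "dist x y < r"
proof -
  have "bdd_below ((\<lambda>a. dist x a) ` B)" by (auto intro: bdd_belowI2[where m=0])
  then show ?thesis using assms that unfolding infdist_def by (auto simp: cINF_less_iff)
qed

lemma hull_approx:
  fixes A B :: "'a::real_normed_vector set"
  assumes "B \<noteq> {}" "\<forall>x\<in>A. infdist x B \<le> e"
  shows "\<forall>x\<in>convex hull A. infdist x (convex hull B) \<le> e"
proof
  fix x assume x: "x \<in> convex hull A"
  show "infdist x (convex hull B) \<le> e"
  proof (rule field_le_epsilon)
    fix d :: real assume d: "d > 0"
    define S where "S = {z. \<exists>y\<in>convex hull B. dist z y \<le> e + d}"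
    have "convex S" unfolding convex_def
    proof (intro ballI allI impI)
      fix z1 z2 and u v :: real
      assume z1: "z1 \<in> S" and z2: "z2 \<in> S" and u: "0 \<le> u" and v: "0 \<le> v" and uv: "u + v = 1"
      obtain y1 where y1: "y1 \<in> convex hull B" "dist z1 y1 \<le> e + d" using z1 S_def by auto
      obtain y2 where y2: "y2 \<in> convex hull B" "dist z2 y2 \<le> e + d" using z2 S_def by auto
      have yin: "u *\<^sub>R y1 + v *\<^sub>R y2 \<in> convex hull B"
        using convexD[OF convex_convex_hull y1(1) y2(1) u v uv] .
      have "dist (u *\<^sub>R z1 + v *\<^sub>R z2) (u *\<^sub>R y1 + v *\<^sub>R y2)
            = norm (u *\<^sub>R (z1 - y1) + v *\<^sub>R (z2 - y2))"
        by (simp add: dist_norm algebra_simps)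
      also have "\<dots> \<le> norm (u *\<^sub>R (z1 - y1)) + norm (v *\<^sub>R (z2 - y2))" by (rule norm_triangle_ineq)
      also have "\<dots> = u * dist z1 y1 + v * dist z2 y2" using u v by (simp add: dist_norm)
      also have "\<dots> \<le> u * (e + d) + v * (e + d)"
        using u v y1(2) y2(2) by (intro add_mono mult_left_mono) auto
      also have "\<dots> = (u + v) * (e + d)" by (simp add: algebra_simps)
      also have "\<dots> = e + d" using uv by simp
      finally show "u *\<^sub>R z1 + v *\<^sub>R z2 \<in> S" using yin S_def by auto
    qed
    moreover have "A \<subseteq> S"
    proof
      fix z assume z: "z \<in> A"
      then have "infdist z B < e + d" using assms(2) d by force
      then obtain y where "y \<in> B" "dist z y < e + d" using infdist_lessE assms(1) by blast
      then have "y \<in> convex hull B" "dist z y \<le> e + d" by (auto intro: hull_inc)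
      then show "z \<in> S" unfolding S_def by blast
    qed
    ultimately have "convex hull A \<subseteq> S" by (rule hull_minimal[rotated])
    then obtain y where "y \<in> convex hull B" "dist x y \<le> e + d" using x S_def by auto
    then show "infdist x (convex hull B) \<le> e + d" by (rule infdist_le2)
  qed
qed

definition gam :: "real \<Rightarrow> real \<Rightarrow> real \<Rightarrow> real \<Rightarrow> real \<times> real" where
  "gam a b p th = (1 / pnorm a b p (cos th, sin th)) *\<^sub>R (cos th, sin th)"

lemma vertex_gam: "vertex a b p k t = gam a b p (2 * real t * pi / real k)"
  unfolding vertex_def gam_def Let_def by simp

lemma sum_pos:
  fixes a b p th :: real
  assumes "a > 0" "b > 0"
  shows "\<bar>cos th / a\<bar> powr p + \<bar>sin th / b\<bar> powr p > 0"
proof (cases "cos th = 0")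
  case True
  then have "sin th \<noteq> 0" using sin_cos_squared_add[of th] by auto
  then show ?thesis using assms by (simp add: add_nonneg_pos)
next
  case False
  then show ?thesis using assms by (simp add: add_pos_nonneg)
qed

lemma pnorm_pos:
  fixes a b p th :: real
  assumes "a > 0" "b > 0"
  shows "pnorm a b p (cos th, sin th) > 0"
  using sum_pos[OF assms, of th p] unfolding pnorm_def by simp

lemma gam_cont:
  assumes "a > 0" "b > 0" "p > 0"
  shows "continuous_on S (gam a b p)"
proof -
  have c1: "continuous_on S (\<lambda>th. \<bar>cos th / a\<bar> powr p)"
    using assms by (intro continuous_on_powr' continuous_intros) auto
  have c2: "continuous_on S (\<lambda>th. \<bar>sin th / b\<bar> powr p)"
    using assms by (intro continuous_on_powr' continuous_intros) auto
  have c3: "continuous_on S (\<lambda>th. pnorm a b p (cos th, sin th))"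
  proof -
    have "\<And>th. \<bar>cos th / a\<bar> powr p + \<bar>sin th / b\<bar> powr p \<noteq> 0"
      using sum_pos[OF assms(1,2)] by (metis less_irrefl)
    then show ?thesis unfolding pnorm_def fst_conv snd_conv
      by (intro continuous_on_powr[OF continuous_on_add[OF c1 c2] continuous_on_const]) auto
  qed
  have pos: "\<And>th. pnorm a b p (cos th, sin th) \<noteq> 0"
    using pnorm_pos[OF assms(1,2)] by (metis less_irrefl)
  show ?thesis unfolding gam_def
    by (intro continuous_intros c3) (auto simp: pos)
qed

lemma gam_on:
  assumes "a > 0" "b > 0" "p > 0"
  shows "gam a b p th \<in> superellipse a b p"
proof -
  define S where "S = \<bar>cos th / a\<bar> powr p + \<bar>sin th / b\<bar> powr p"
  define N where "N = pnorm a b p (cos th, sin th)"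
  have S: "S > 0" using sum_pos[OF assms(1,2)] S_def by simp
  have N: "N = S powr (1/p)" unfolding N_def S_def pnorm_def by simp
  have Np: "N powr p = S" using S assms(3) by (simp add: N powr_powr)
  have Npos: "N > 0" using N S by simp
  have "\<bar>cos th / N / a\<bar> powr p + \<bar>sin th / N / b\<bar> powr p = S / N powr p"
    using Npos assms unfolding S_def
    by (simp add: abs_mult powr_mult abs_divide powr_divide add_divide_distrib divide_divide_eq_left mult.commute)
  also have "\<dots> = 1" using Np S by simp
  finally show ?thesis unfolding superellipse_def gam_def N_def[symmetric] using Npos by (simp add: abs_mult)
qed

lemma pnorm_scale:
  assumes "r > 0" "p > 0"
  shows "pnorm a b p (r *\<^sub>R v) = r * pnorm a b p v"
proof -
  have "pnorm a b p (r *\<^sub>R v) = (r powr p * (\<bar>fst v / a\<bar> powr p + \<bar>snd v / b\<bar> powr p)) powr (1/p)"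
    unfolding pnorm_def using assms
    by (simp add: abs_mult powr_mult distrib_left mult.assoc times_divide_eq_right[symmetric] del: times_divide_eq_right)
  also have "\<dots> = (r powr p) powr (1/p) * pnorm a b p v"
    unfolding pnorm_def by (simp add: powr_mult)
  also have "(r powr p) powr (1/p) = r" using assms by (simp add: powr_powr)
  finally show ?thesis .
qed

lemma curve_param:
  assumes "a > 0" "b > 0" "p > 0" "c \<in> superellipse a b p"
  obtains th where "0 \<le> th" "th < 2 * pi" "c = gam a b p th"
proof -
  obtain x y where c: "c = (x, y)" by fastforce
  have eq: "\<bar>x / a\<bar> powr p + \<bar>y / b\<bar> powr p = 1" using assms(4) c superellipse_def by auto
  have nz: "(x, y) \<noteq> 0" using eq assms by (auto simp: zero_prod_def)
  define r where "r = norm (x, y)"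
  have r: "r > 0" unfolding r_def using nz by (metis zero_less_norm_iff)
  have "(x / r)\<^sup>2 + (y / r)\<^sup>2 = 1"
  proof -
    have r2: "x\<^sup>2 + y\<^sup>2 = r\<^sup>2" unfolding r_def by (simp add: norm_Pair)
    show ?thesis using r by (simp add: power_divide add_divide_distrib[symmetric] r2)
  qed
  then obtain th where th: "0 \<le> th" "th < 2 * pi" "x / r = cos th" "y / r = sin th"
    by (rule sincos_total_2pi)
  have cu: "c = r *\<^sub>R (cos th, sin th)" using th r c by (auto simp: field_simps)
  have "pnorm a b p c = 1" using eq c unfolding pnorm_def by simp
  then have "r * pnorm a b p (cos th, sin th) = 1" using pnorm_scale[OF r assms(3), of a b "(cos th, sin th)"] cu by simp
  then have "1 / pnorm a b p (cos th, sin th) = r" by (metis divide_eq_eq mult.commute mult_zero_right zero_neq_one)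
  then have "c = gam a b p th" using cu unfolding gam_def by simp
  then show ?thesis using th that by blast
qed


lemma approx_main:
  fixes a b p e :: real
  assumes ab: "a > 0" "b > 0" "p > 0" and e: "e > 0"
  shows "\<exists>N. \<forall>k\<ge>N. polygon a b p k \<noteq> {} \<and>
     (\<forall>x\<in>polygon a b p k. infdist x (superellipse a b p) \<le> e) \<and>
     (\<forall>y\<in>superellipse a b p. infdist y (polygon a b p k) \<le> e)"
proof -
  let ?g = "gam a b p"
  have "uniformly_continuous_on {0..2*pi} ?g"
    by (rule compact_uniformly_continuous[OF gam_cont[OF ab] compact_Icc])
  then obtain d where d: "d > 0"
    and dd: "\<And>x x'. x \<in> {0..2*pi} \<Longrightarrow> x' \<in> {0..2*pi} \<Longrightarrow> dist x' x < d \<Longrightarrow> dist (?g x') (?g x) < e"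
    using e unfolding uniformly_continuous_on_def by metis
  obtain N :: nat where N: "2 * pi / d < real N" using reals_Archimedean2 by blast
  have "\<forall>k\<ge>N + 1. polygon a b p k \<noteq> {} \<and>
     (\<forall>x\<in>polygon a b p k. infdist x (superellipse a b p) \<le> e) \<and>
     (\<forall>y\<in>superellipse a b p. infdist y (polygon a b p k) \<le> e)"
  proof (intro allI impI conjI ballI)
    fix k :: nat assume k: "N + 1 \<le> k"
    then have kpos: "real k > 0" by simp
    have "2 * pi / d < real k" using N k by linarith
    then have "2 * pi < d * real k" using d by (simp add: field_simps)
    then have step: "2 * pi / real k < d" using kpos by (simp add: field_simps)
    have V: "\<And>t. vertex a b p k t = ?g (2 * real t * pi / real k)" by (rule vertex_gam)
    have th_in: "\<And>t. t \<le> k \<Longrightarrow> 2 * real t * pi / real k \<in> {0..2*pi}"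
    proof -
      fix t :: nat assume "t \<le> k"
      then have "real t / real k \<le> 1" using kpos by simp
      then have "2 * pi * (real t / real k) \<le> 2 * pi * 1" by (intro mult_left_mono) auto
      then show "2 * real t * pi / real k \<in> {0..2*pi}" by (simp add: field_simps)
    qed
    have V0: "vertex a b p k 0 \<in> polygon a b p k"
      unfolding polygon_def using kpos by auto
    then show "polygon a b p k \<noteq> {}" by auto
    {
      fix x assume x: "x \<in> polygon a b p k"
      then obtain t where t: "t < k"
        and xs: "x \<in> closed_segment (vertex a b p k t) (vertex a b p k ((t + 1) mod k))"
        unfolding polygon_def by auto
      have V1: "vertex a b p k ((t + 1) mod k) = ?g (2 * real (t + 1) * pi / real k)"
      proof (cases "t + 1 < k")
        case True
        then show ?thesis using V by simp
      next
        case False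
        then have tk: "t + 1 = k" using t by simp
        then have "2 * real (t + 1) * pi / real k = 2 * pi" using kpos by simp
        moreover have "?g (2 * pi) = ?g 0" unfolding gam_def by simp
        ultimately show ?thesis using V[of 0] tk by simp
      qed
      have "dist (2 * real (t + 1) * pi / real k) (2 * real t * pi / real k) = 2 * pi / real k"
        using kpos by (simp add: dist_real_def field_simps)
      then have "dist (?g (2 * real (t + 1) * pi / real k)) (?g (2 * real t * pi / real k)) < e"
        using step t by (intro dd th_in) auto
      then have d1: "dist (vertex a b p k t) (vertex a b p k ((t + 1) mod k)) < e"
        using V V1 by (simp add: dist_commute)
      have "dist x (vertex a b p k t) \<le> dist (vertex a b p k t) (vertex a b p k ((t + 1) mod k))"
        using dist_in_closed_segment[OF xs] by simp
      moreover have "vertex a b p k t \<in> superellipse a b p" using V gam_on[OF ab] by simp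
      ultimately show "infdist x (superellipse a b p) \<le> e"
        using d1 by (meson infdist_le2 less_imp_le order_trans)
    }
    {
      fix y assume y: "y \<in> superellipse a b p"
      then obtain th where th: "0 \<le> th" "th < 2 * pi" "y = ?g th"
        using curve_param[OF ab] by blast
      define q where "q = th * real k / (2 * pi)"
      have q0: "0 \<le> q" using th kpos by (simp add: q_def)
      have qk: "q < real k" using th kpos unfolding q_def by (simp add: field_simps)
      define t where "t = nat \<lfloor>q\<rfloor>"
      have t1: "real t \<le> q" "q < real t + 1" using q0 unfolding t_def by linarith+
      then have tk: "t < k" using qk by linarith
      have "2 * real t * pi / real k \<le> th"
        using t1(1) kpos unfolding q_def by (simp add: field_simps)
      moreover have "th < 2 * real t * pi / real k + 2 * pi / real k"
        using t1(2) kpos unfolding q_def by (simp add: field_simps)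
      ultimately have "dist th (2 * real t * pi / real k) < d"
        using step by (simp add: dist_real_def)
      then have "dist (?g th) (?g (2 * real t * pi / real k)) < e"
        using tk th by (intro dd th_in) auto
      then have dv: "dist y (vertex a b p k t) < e" using th V by simp
      have "vertex a b p k t \<in> polygon a b p k" unfolding polygon_def using tk by auto
      then show "infdist y (polygon a b p k) \<le> e"
        using dv by (meson infdist_le2 less_imp_le)
    }
  qed
  then show ?thesis by blast
qed

theorem theorem3p10:
  fixes a b p :: real
  assumes "a > 0" and "b > 0" and "p > 1"
  shows "(\<lambda>k. hausdorff_dist (polygon a b p k) (superellipse a b p)) \<longlonglongrightarrow> 0 \<and>
         (\<lambda>k. hausdorff_dist (polygon_hull a b p k) (superelliptic_disk a b p)) \<longlonglongrightarrow> 0"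
proof -
  have ab: "a > 0" "b > 0" "p > 0" using assms by auto
  have Cne: "superellipse a b p \<noteq> {}" using gam_on[OF ab] by blast
  have key: "\<exists>N. \<forall>k\<ge>N. \<bar>hausdorff_dist (polygon a b p k) (superellipse a b p)\<bar> < r \<and>
      \<bar>hausdorff_dist (polygon_hull a b p k) (superelliptic_disk a b p)\<bar> < r" if r: "r > 0" for r
  proof -
    obtain N where N: "\<forall>k\<ge>N. polygon a b p k \<noteq> {} \<and>
     (\<forall>x\<in>polygon a b p k. infdist x (superellipse a b p) \<le> r / 2) \<and>
     (\<forall>y\<in>superellipse a b p. infdist y (polygon a b p k) \<le> r / 2)"
      using approx_main[OF ab, of "r/2"] r by auto
    have "\<bar>hausdorff_dist (polygon a b p k) (superellipse a b p)\<bar> < r \<and>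
      \<bar>hausdorff_dist (polygon_hull a b p k) (superelliptic_disk a b p)\<bar> < r" if k: "k \<ge> N" for k
    proof -
      have P: "polygon a b p k \<noteq> {}"
        and h1: "\<forall>x\<in>polygon a b p k. infdist x (superellipse a b p) \<le> r / 2"
        and h2: "\<forall>y\<in>superellipse a b p. infdist y (polygon a b p k) \<le> r / 2"
        using N k by auto
      have A: "0 \<le> hausdorff_dist (polygon a b p k) (superellipse a b p) \<and>
          hausdorff_dist (polygon a b p k) (superellipse a b p) \<le> r / 2"
        by (rule hd_bound[OF P Cne h1 h2])
      have "0 \<le> hausdorff_dist (polygon_hull a b p k) (superelliptic_disk a b p) \<and>
          hausdorff_dist (polygon_hull a b p k) (superelliptic_disk a b p) \<le> r / 2"
        unfolding polygon_hull_def superelliptic_disk_def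
        using P Cne hull_approx[OF Cne h1] hull_approx[OF P h2]
        by (intro hd_bound) auto
      then show ?thesis using A r by auto
    qed
    then show ?thesis by blast
  qed
  show ?thesis
  proof
    show "(\<lambda>k. hausdorff_dist (polygon a b p k) (superellipse a b p)) \<longlonglongrightarrow> 0"
      by (rule LIMSEQ_I) (use key in \<open>fastforce\<close>)
    show "(\<lambda>k. hausdorff_dist (polygon_hull a b p k) (superelliptic_disk a b p)) \<longlonglongrightarrow> 0"
      by (rule LIMSEQ_I) (use key in \<open>fastforce\<close>)
  qed
qed

end
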